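(* Let $n\geq 1$, $0<\alpha<1$, and let $f:D^n\to D$ be holomorphic, where $D^n=\{z\in\mathbb{C}^n:\|z\|_\infty<1\}$ and $D=\{\zeta\in\mathbb{C}:|\zeta|<1\}$. Let $z_0=(z_{0,1},\dots,z_{0,n})^T\in\partial D^n$ and $1\le r\le n$ be such that $|z_{0,j}|=1$ for $1\le j\le r$ and $|z_{0,j}|<1$ for $r<j\le n$. Suppose $f$ is $C^{1+\alpha}$ at $z_0$ and $f(z_0)=e^{i\theta}$ for some $\theta\in[0,2\pi]$. Put $a=f(0)$. Then there exist nonnegative real numbers $\gamma_1,\dots,\gamma_r$ with $\sum_{j=1}^r\gamma_j\geq1$ such that $$\overline{J_f(z_0)}^T e^{i\theta}=\lambda\,\mathrm{diag}(\gamma_1,\dots,\gamma_r,0,\dots,0)\,z_0,$$ where $\lambda=\dfrac{|1-\bar a e^{i\theta}|^2}{1-|a|^2}>0$.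
   Context: $\|z\|_\infty=\max_j|z_j|$; vectors are column vectors. "$f$ is $C^{1+\alpha}$ at $z_0$" means: there is a neighborhood $V$ of $z_0$ such that $f$ extends to $\overline{D^n}\cap V$ as a $C^1$ function whose first-order partial derivatives are Hölder continuous with exponent $\alpha$ there. $J_f(z_0)=\left(\frac{\partial f}{\partial z_1}(z_0),\dots,\frac{\partial f}{\partial z_n}(z_0)\right)$ is the $1\times n$ complex Jacobian of $f$ at $z_0$, and $\overline{J_f(z_0)}^T$ its conjugate transpose (an $n\times1$ column). $\mathrm{diag}(\gamma_1,\dots,\gamma_r,0,\dots,0)$ is the $n\times n$ diagonal matrix with those diagonal entries. *)

theory Defs
  imports "HOL-Analysis.Analysis"
begin

definition polydisc :: "(complex ^ 'n) set" where
  "polydisc = {z. \<forall>j. norm (z $ j) < 1}"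

definition cpolydisc :: "(complex ^ 'n) set" where
  "cpolydisc = {z. \<forall>j. norm (z $ j) \<le> 1}"

definition holo_on :: "(complex ^ 'n \<Rightarrow> complex) \<Rightarrow> (complex ^ 'n) set \<Rightarrow> bool" where
  "holo_on f S \<longleftrightarrow> (\<forall>z\<in>S. \<exists>c :: complex ^ 'n.
      (f has_derivative (\<lambda>h. \<Sum>j\<in>UNIV. c $ j * h $ j)) (at z))"

text \<open>f is C^{1+alpha} at z0, witnessed by: an open neighbourhood V of z0, a C^1 extension g
  of f to the closed polydisc intersected with V with (real) derivative Dg, whose first order
  (real) partial derivatives Dg z b (b ranging over the real basis) are alpha-Hoelder there.\<close>
definition C1alpha_ext_at ::
  "real \<Rightarrow> (complex ^ 'n \<Rightarrow> complex) \<Rightarrow> complex ^ 'n \<Rightarrow> (complex ^ 'n \<Rightarrow> complex)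
     \<Rightarrow> (complex ^ 'n \<Rightarrow> complex ^ 'n \<Rightarrow> complex) \<Rightarrow> bool" where
  "C1alpha_ext_at \<alpha> f z0 g Dg \<longleftrightarrow>
     (\<exists>V. open V \<and> z0 \<in> V \<and>
        (\<forall>z\<in>polydisc \<inter> V. g z = f z) \<and>
        (\<forall>z\<in>cpolydisc \<inter> V. (g has_derivative Dg z) (at z within (cpolydisc \<inter> V))) \<and>
        (\<exists>C. \<forall>b\<in>Basis. \<forall>z\<in>cpolydisc \<inter> V. \<forall>w\<in>cpolydisc \<inter> V.
             norm (Dg z b - Dg w b) \<le> C * dist z w powr \<alpha>))"

text \<open>Complex (Wirtinger) partial derivative d/dz_j computed from the real derivative.\<close>
definition cpartial :: "(complex ^ 'n \<Rightarrow> complex) \<Rightarrow> 'n \<Rightarrow> complex" where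
  "cpartial L j = (L (axis j 1) - \<i> * L (axis j \<i>)) / 2"

end

theory Submission imports Defs "HOL-Complex_Analysis.Conformal_Mappings" begin

lemma lemB:
  fixes g :: "'a::real_normed_vector \<Rightarrow> complex" and \<Psi> :: "complex \<Rightarrow> complex"
  assumes gd: "(g has_derivative L) (at z0 within S)"
    and d: "0 < \<delta>"
    and inS: "\<And>t. 0 < t \<Longrightarrow> t < \<delta> \<Longrightarrow> z0 + t *\<^sub>R v \<in> S"
    and z0S: "z0 \<in> S"
    and Pd: "(\<Psi> has_field_derivative P') (at (g z0))"
    and le: "\<And>t. 0 < t \<Longrightarrow> t < \<delta> \<Longrightarrow> Re (\<Psi> (g (z0 + t *\<^sub>R v))) \<le> Re (\<Psi> (g z0)) - k * t"
  shows "Re (P' * L v) \<le> - k"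
proof -
  define T where "T = {0<..<\<delta>}"
  define p where "p = (\<lambda>t::real. z0 + t *\<^sub>R v)"
  have pd: "(p has_derivative (\<lambda>t. t *\<^sub>R v)) (at 0 within T)"
    unfolding p_def by (auto intro!: derivative_eq_intros)
  have img: "p ` T \<subseteq> S" using inS unfolding T_def p_def by auto
  have p0: "p 0 = z0" by (simp add: p_def)
  have gd2: "(g has_derivative L) (at (p 0) within p ` T)"
    using has_derivative_subset[OF gd img] p0 by simp
  have c1: "((g \<circ> p) has_derivative (L \<circ> (\<lambda>t. t *\<^sub>R v))) (at 0 within T)"
    by (rule diff_chain_within[OF pd gd2])
  have Pd2: "(\<Psi> has_derivative (\<lambda>x. x * P')) (at ((g \<circ> p) 0) within (g \<circ> p) ` T)"
  proof -
    have "(\<lambda>x. x * P') = (*) P'" by (rule ext) (simp add: mult.commute)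
    thus ?thesis using Pd p0 unfolding has_field_derivative_def
      by (auto intro: has_derivative_at_withinI)
  qed
  have c2: "((\<Psi> \<circ> (g \<circ> p)) has_derivative ((\<lambda>x. x * P') \<circ> (L \<circ> (\<lambda>t. t *\<^sub>R v)))) (at 0 within T)"
    by (rule diff_chain_within[OF c1 Pd2])
  have bl: "bounded_linear L" using gd by (rule has_derivative_bounded_linear)
  then interpret L: bounded_linear L .
  have c3: "((\<lambda>t. Re ((\<Psi> \<circ> (g \<circ> p)) t)) has_derivative (\<lambda>t. Re (((\<lambda>x. x * P') \<circ> (L \<circ> (\<lambda>t. t *\<^sub>R v))) t))) (at 0 within T)"
    by (rule bounded_linear.has_derivative[OF bounded_linear_Re c2])
  have eqf: "(\<lambda>t. Re (((\<lambda>x. x * P') \<circ> (L \<circ> (\<lambda>t. t *\<^sub>R v))) t)) = (*) (Re (P' * L v))"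
    by (rule ext) (simp add: L.scaleR mult.commute)
  have c4: "((\<lambda>t. Re (\<Psi> (g (p t)))) has_field_derivative (Re (P' * L v))) (at 0 within T)"
    using c3 unfolding has_field_derivative_def eqf by (simp add: comp_def)
  hence lim: "((\<lambda>t. (Re (\<Psi> (g (p t))) - Re (\<Psi> (g (p 0)))) / (t - 0)) \<longlongrightarrow> Re (P' * L v)) (at 0 within T)"
    by (simp add: has_field_derivative_iff)
  have nt: "\<not> trivial_limit (at (0::real) within T)"
    unfolding trivial_limit_within T_def using islimpt_greaterThanLessThan1[OF d] by simp
  have ev: "\<forall>\<^sub>F t in at 0 within T. (Re (\<Psi> (g (p t))) - Re (\<Psi> (g (p 0)))) / (t - 0) \<le> -k"
    unfolding eventually_at_filter
  proof (rule always_eventually, intro allI impI)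
    fix t assume "t \<noteq> 0" "t \<in> T"
    hence t: "0 < t" "t < \<delta>" by (auto simp: T_def)
    have "Re (\<Psi> (g (p t))) - Re (\<Psi> (g (p 0))) \<le> -k * t" using le[OF t] p0 by (simp add: p_def)
    thus "(Re (\<Psi> (g (p t))) - Re (\<Psi> (g (p 0)))) / (t - 0) \<le> -k" using t
      by (simp add: divide_le_eq)
  qed
  show ?thesis by (rule tendsto_upperbound[OF lim ev nt])
qed

lemma open_polydisc: "open (polydisc :: (complex^'n) set)"
proof -
  have eq: "polydisc = (\<Inter>j\<in>UNIV. {z::complex^'n. cmod (z$j) < 1})"
    by (auto simp: polydisc_def)
  have op: "open {z::complex^'n. cmod (z$j) < 1}" for j
    by (intro open_Collect_less continuous_intros)
  show ?thesis unfolding eq by (rule open_INT) (simp_all add: op)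
qed

lemma moeb_id: "(cmod (1 - cnj a * x))\<^sup>2 - (cmod (x - a))\<^sup>2 = (1 - (cmod a)\<^sup>2) * (1 - (cmod x)\<^sup>2)"
proof -
  have "(cmod (1 - cnj a * x))\<^sup>2 = (1 - Re a * Re x - Im a * Im x)^2 + (Re a * Im x - Im a * Re x)^2"
    unfolding cmod_power2 by (simp add: algebra_simps power2_commute)
  moreover have "(cmod (x - a))\<^sup>2 = (Re x - Re a)^2 + (Im x - Im a)^2" by (simp add: cmod_power2)
  moreover have "(cmod a)\<^sup>2 = Re a ^2 + Im a^2" "(cmod x)\<^sup>2 = Re x ^2 + Im x^2" by (simp_all add: cmod_power2)
  ultimately show ?thesis by (simp add: power2_eq_square algebra_simps)
qed

lemma moeb_lt: assumes "cmod a < 1" "cmod x < 1" shows "cmod ((x - a) / (1 - cnj a * x)) < 1"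
proof -
  have p: "0 < (1 - (cmod a)\<^sup>2) * (1 - (cmod x)\<^sup>2)"
    using assms by (intro mult_pos_pos) (simp_all add: power_less_one_iff abs_less_iff)
  hence "(cmod (x - a))\<^sup>2 < (cmod (1 - cnj a * x))\<^sup>2" using moeb_id[of a x] by linarith
  hence lt: "cmod (x - a) < cmod (1 - cnj a * x)" by (simp add: power2_less_imp_less)
  hence "cmod (1 - cnj a * x) > 0" by (meson le_less_trans norm_ge_zero)
  thus ?thesis using lt by (simp add: norm_divide divide_less_eq)
qed

lemma moeb_eq: assumes "cmod a < 1" "cmod x = 1" shows "cmod ((x - a) / (1 - cnj a * x)) = 1"
proof -
  have "(cmod (x - a))\<^sup>2 = (cmod (1 - cnj a * x))\<^sup>2" using moeb_id[of a x] assms by simp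
  hence e: "cmod (x - a) = cmod (1 - cnj a * x)" by (simp add: power2_eq_iff_nonneg)
  have "cmod (cnj a * x) < 1" using assms by (simp add: norm_mult)
  hence "1 - cnj a * x \<noteq> 0" by auto
  thus ?thesis using e by (simp add: norm_divide)
qed

lemma comp_expand:
  fixes L :: "complex^'n \<Rightarrow> complex"
  assumes "linear L" "\<And>j. L (axis j \<i>) = \<i> * L (axis j 1)"
  shows "L h = (\<Sum>j\<in>UNIV. L (axis j 1) * h$j)"
proof -
  interpret linear L by fact
  have ax: "L (axis j u) = L (axis j 1) * u" for j u
  proof -
    have "axis j u = Re u *\<^sub>R axis j 1 + Im u *\<^sub>R axis j \<i>"
      by (simp add: vec_eq_iff axis_def complex_eq_iff)
    hence "L (axis j u) = Re u *\<^sub>R L (axis j 1) + Im u *\<^sub>R L (axis j \<i>)"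
      by (simp add: add scale)
    also have "\<dots> = L (axis j 1) * u" using assms(2)
      by (simp add: scaleR_conv_of_real complex_eq_iff algebra_simps)
    finally show ?thesis .
  qed
  have "h = (\<Sum>j\<in>UNIV. axis j (h$j))"
    by (simp add: vec_eq_iff axis_def sum_component)
  hence "L h = L (\<Sum>j\<in>UNIV. axis j (h$j))" by (rule arg_cong)
  also have "\<dots> = (\<Sum>j\<in>UNIV. L (axis j (h$j)))" by (rule sum)
  also have "\<dots> = (\<Sum>j\<in>UNIV. L (axis j 1) * h$j)"
    by (rule sum.cong[OF refl]) (rule ax)
  finally show ?thesis .
qed

lemma norm_add_sq: "(cmod (a + b))\<^sup>2 = (cmod a)\<^sup>2 + 2 * Re (cnj a * b) + (cmod b)\<^sup>2"
  unfolding cmod_power2 by (simp add: power2_eq_square algebra_simps)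

lemma cnj_unit: "cmod z = 1 \<Longrightarrow> cnj z * z = 1"
  using complex_norm_square[of z] by (simp add: mult.commute)

lemma bdry_step:
  fixes z v :: complex
  assumes "cmod z = 1" "Re (cnj z * v) < 0"
  shows "\<forall>\<^sub>F t in at_right (0::real). cmod (z + t *\<^sub>R v) < 1"
proof -
  define r where "r = Re (cnj z * v)"
  have "\<forall>\<^sub>F t in at_right (0::real). t \<in> {0<..<(- r) / ((cmod v)\<^sup>2 + 1)}"
  proof (rule eventually_at_right_real)
    have "0 < - r" using assms by (simp add: r_def)
    moreover have "0 < (cmod v)\<^sup>2 + 1" by (simp add: add_nonneg_pos)
    ultimately show "0 < (- r) / ((cmod v)\<^sup>2 + 1)" by (rule divide_pos_pos)
  qed
  thus ?thesis
  proof eventually_elim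
    case (elim t)
    have pos: "0 < (cmod v)\<^sup>2 + 1" by (simp add: add_nonneg_pos)
    from elim have t0: "0 < t" "t < (- r) / ((cmod v)\<^sup>2 + 1)" by auto
    hence t: "0 < t" "t * ((cmod v)\<^sup>2 + 1) < - r" using pos_less_divide_eq[OF pos] by blast+
    have t2: "t * (cmod v)\<^sup>2 < - r" using t by (simp add: distrib_left)
    have tt: "t * (t * (cmod v)\<^sup>2) < t * (- r)" by (rule mult_strict_left_mono[OF t2 t(1)])
    have "(cmod (z + t *\<^sub>R v))\<^sup>2 = 1 + 2 * t * r + t\<^sup>2 * (cmod v)\<^sup>2"
      unfolding norm_add_sq using assms by (simp add: r_def scaleR_conv_of_real power_mult_distrib norm_mult algebra_simps)
    also have "\<dots> < 1"
    proof -
      have e2: "t\<^sup>2 * (cmod v)\<^sup>2 = t * (t * (cmod v)\<^sup>2)" by (simp add: power2_eq_square)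
      have "t * (- r) = - (t * r)" by simp
      moreover have "t * r < 0" using t(1) assms(2) by (simp add: r_def mult_pos_neg)
      ultimately show ?thesis using tt e2 by linarith
    qed
    finally show ?case by (simp add: power_less_one_iff)
  qed
qed


theorem corollary1p2:
  fixes f :: "complex ^ 'n \<Rightarrow> complex"
    and g :: "complex ^ 'n \<Rightarrow> complex"
    and Dg :: "complex ^ 'n \<Rightarrow> complex ^ 'n \<Rightarrow> complex"
    and z0 :: "complex ^ 'n"
    and \<alpha> \<theta> :: real
  assumes alpha: "0 < \<alpha>" "\<alpha> < 1"
    and holo: "holo_on f polydisc"
    and maps: "\<forall>z\<in>polydisc. norm (f z) < 1"
    and bdry: "\<forall>j. norm (z0 $ j) \<le> 1" "\<exists>j. norm (z0 $ j) = 1"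
    and reg: "C1alpha_ext_at \<alpha> f z0 g Dg"
    and theta: "0 \<le> \<theta>" "\<theta> \<le> 2 * pi" "g z0 = exp (\<i> * of_real \<theta>)"
  shows "\<exists>\<gamma> :: 'n \<Rightarrow> real.
           (\<forall>j. 0 \<le> \<gamma> j) \<and> (\<forall>j. norm (z0 $ j) < 1 \<longrightarrow> \<gamma> j = 0) \<and>
           (\<Sum>j\<in>{j. norm (z0 $ j) = 1}. \<gamma> j) \<ge> 1 \<and>
           (\<forall>j. cnj (cpartial (Dg z0) j) * exp (\<i> * of_real \<theta>)
                 = of_real ((cmod (1 - cnj (f 0) * exp (\<i> * of_real \<theta>)))\<^sup>2
                             / (1 - (cmod (f 0))\<^sup>2))
                   * of_real (\<gamma> j) * z0 $ j)"
proof -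
  obtain V C where Vo: "open V" and z0V: "z0 \<in> V"
    and gf: "\<And>z. z \<in> polydisc \<inter> V \<Longrightarrow> g z = f z"
    and gder: "\<And>z. z \<in> cpolydisc \<inter> V \<Longrightarrow> (g has_derivative Dg z) (at z within (cpolydisc \<inter> V))"
    and hol: "\<And>b z w. b \<in> Basis \<Longrightarrow> z \<in> cpolydisc \<inter> V \<Longrightarrow> w \<in> cpolydisc \<inter> V \<Longrightarrow>
             norm (Dg z b - Dg w b) \<le> C * dist z w powr \<alpha>"
    using reg unfolding C1alpha_ext_at_def by metis
  define S where "S = cpolydisc \<inter> V"
  define T where "T = polydisc \<inter> V"
  have TS: "T \<subseteq> S" by (auto simp: T_def S_def polydisc_def cpolydisc_def less_imp_le)
  have To: "open T" unfolding T_def using open_polydisc Vo by auto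
  have z0S: "z0 \<in> S" using bdry z0V by (simp add: S_def cpolydisc_def)
  define L where "L = Dg z0"
  define \<eta> where "\<eta> = exp (\<i> * of_real \<theta>)"
  define w where "w = cnj \<eta>"
  have eta1: "cmod \<eta> = 1" by (simp add: \<eta>_def)
  have w\<eta>: "w * \<eta> = 1" using complex_norm_square[of \<eta>] eta1 by (simp add: w_def mult.commute)
  have gz0: "g z0 = \<eta>" using theta by (simp add: \<eta>_def)
  have gd: "(g has_derivative L) (at z0 within S)" using gder z0S by (simp add: L_def S_def)
  have Llin: "linear L" using has_derivative_linear[OF gd] .
  have DgT: "Dg z (axis j \<i>) = \<i> * Dg z (axis j 1)" if zT: "z \<in> T" for z j
  proof -
    from holo zT obtain c :: "complex^'n" where fd: "(f has_derivative (\<lambda>h. \<Sum>j\<in>UNIV. c $ j * h $ j)) (at z)"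
      by (auto simp: holo_on_def T_def)
    have "(g has_derivative Dg z) (at z within T)"
      using has_derivative_subset[OF gder[of z]] zT TS by (auto simp: S_def)
    hence gd1: "(g has_derivative Dg z) (at z)" using at_within_open[OF zT To] by simp
    have gd2: "(g has_derivative (\<lambda>h. \<Sum>j\<in>UNIV. c $ j * h $ j)) (at z)"
      by (rule has_derivative_transform_within_open[OF fd To zT]) (simp add: gf T_def)
    have "Dg z = (\<lambda>h. \<Sum>j\<in>UNIV. c $ j * h $ j)" by (rule has_derivative_unique[OF gd1 gd2])
    thus ?thesis by (simp add: axis_def sum_distrib_left if_distrib cong: if_cong)
  qed
  have radT: "\<forall>\<^sub>F s in at_right 0. z0 - s *\<^sub>R z0 \<in> T"
  proof -
    have "((\<lambda>s. z0 - s *\<^sub>R z0) \<longlongrightarrow> z0 - 0 *\<^sub>R z0) (at_right 0)"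
      by (intro tendsto_intros)
    hence "\<forall>\<^sub>F s in at_right 0. z0 - s *\<^sub>R z0 \<in> V" using Vo z0V topological_tendstoD by fastforce
    moreover have "\<forall>\<^sub>F s in at_right (0::real). s \<in> {0<..<1}" by (rule eventually_at_right_real) simp
    ultimately show ?thesis
    proof eventually_elim
      case (elim s)
      have "cmod ((z0 - s *\<^sub>R z0) $ j) < 1" for j
      proof -
        have "(z0 - s *\<^sub>R z0) $ j = (1 - s) *\<^sub>R z0 $ j" by (simp add: scaleR_diff_left)
        hence "cmod ((z0 - s *\<^sub>R z0) $ j) = (1 - s) * cmod (z0 $ j)"
          using elim by simp
        also have "\<dots> \<le> 1 - s" using bdry(1)[rule_format, of j] elim by (intro mult_left_le) auto
        finally show ?thesis using elim by simp
      qed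
      thus ?case using elim by (simp add: T_def polydisc_def)
    qed
  qed
  have cl: "L (axis j \<i>) = \<i> * L (axis j 1)" for j
  proof -
    define E where "E = L (axis j \<i>) - \<i> * L (axis j 1)"
    have b1: "axis j 1 \<in> (Basis :: (complex^'n) set)" and b2: "axis j \<i> \<in> (Basis :: (complex^'n) set)"
      by (auto simp: Basis_vec_def Basis_complex_def)
    have ev0: "\<forall>\<^sub>F s in at_right (0::real). 0 \<le> s * norm z0"
      by (rule eventually_mono[OF eventually_at_right_less]) simp
    have lim: "((\<lambda>s. 2 * C * (s * norm z0) powr \<alpha>) \<longlongrightarrow> 2 * C * (0 * norm z0) powr \<alpha>) (at_right 0)"
      using alpha ev0 by (intro tendsto_intros) auto
    have ev: "\<forall>\<^sub>F s in at_right 0. norm E \<le> 2 * C * (s * norm z0) powr \<alpha>"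
      using radT eventually_at_right_less[of 0]
    proof eventually_elim
      case (elim s)
      define z where "z = z0 - s *\<^sub>R z0"
      have zT: "z \<in> T" using elim by (simp add: z_def)
      hence zS: "z \<in> S" using TS by auto
      have dz: "dist z z0 = s * norm z0" using elim by (simp add: z_def dist_norm)
      have dz': "dist z0 z = s * norm z0" using dz by (simp add: dist_commute)
      have e1: "E = (L (axis j \<i>) - Dg z (axis j \<i>)) + \<i> * (Dg z (axis j 1) - L (axis j 1))"
        unfolding E_def DgT[OF zT, of j] by (simp add: right_diff_distrib)
      have "norm E \<le> norm (L (axis j \<i>) - Dg z (axis j \<i>)) + norm (\<i> * (Dg z (axis j 1) - L (axis j 1)))"
        unfolding e1 by (rule norm_triangle_ineq)
      also have "\<dots> = norm (Dg z0 (axis j \<i>) - Dg z (axis j \<i>)) + norm (Dg z (axis j 1) - Dg z0 (axis j 1))"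
        by (simp add: L_def norm_mult)
      also have "\<dots> \<le> C * dist z0 z powr \<alpha> + C * dist z z0 powr \<alpha>"
        using hol[OF b2 z0S[unfolded S_def] zS[unfolded S_def]] hol[OF b1 zS[unfolded S_def] z0S[unfolded S_def]]
        by (rule add_mono)
      also have "\<dots> = 2 * C * (s * norm z0) powr \<alpha>" unfolding dz dz' by simp
      finally show ?case .
    qed
    have "norm E \<le> 2 * C * (0 * norm z0) powr \<alpha>"
      by (rule tendsto_lowerbound[OF lim ev]) simp
    hence "E = 0" by simp
    thus ?thesis by (simp add: E_def)
  qed
  define c where "c j = L (axis j 1)" for j
  have Lexp: "L h = (\<Sum>j\<in>UNIV. c j * h$j)" for h
    unfolding c_def by (rule comp_expand[OF Llin cl])
  have Lax: "L (axis j u) = c j * u" for j u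
    unfolding Lexp by (simp add: axis_def if_distrib cong: if_cong)
  have fT: "cmod (g z) < 1" if "z \<in> T" for z
    using that gf maps by (auto simp: T_def)
  have evV: "\<forall>\<^sub>F t in at_right 0. z0 + t *\<^sub>R v \<in> V" for v
  proof -
    have "((\<lambda>t. z0 + t *\<^sub>R v) \<longlongrightarrow> z0 + 0 *\<^sub>R v) (at_right 0)"
      by (intro tendsto_intros)
    thus ?thesis using Vo z0V topological_tendstoD by fastforce
  qed
  have strict: "Re (w * L v) \<le> 0" if vs: "\<And>k. cmod (z0$k) = 1 \<Longrightarrow> Re (cnj (z0$k) * v$k) < 0" for v
  proof -
    have "\<forall>\<^sub>F t in at_right 0. \<forall>k. cmod ((z0 + t *\<^sub>R v) $ k) < 1"
    proof (rule eventually_all_finite)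
      fix k
      show "\<forall>\<^sub>F t in at_right 0. cmod ((z0 + t *\<^sub>R v) $ k) < 1"
      proof (cases "cmod (z0$k) = 1")
        case True
        show ?thesis using bdry_step[OF True vs[OF True]] by simp
      next
        case False
        hence lt: "cmod (z0$k) < 1" using bdry(1) by (simp add: order_less_le)
        have "((\<lambda>t. cmod (z0$k + t *\<^sub>R v$k)) \<longlongrightarrow> cmod (z0$k + 0 *\<^sub>R v$k)) (at_right 0)"
          by (intro tendsto_intros)
        hence "\<forall>\<^sub>F t in at_right 0. cmod (z0$k + t *\<^sub>R v$k) < 1"
          using lt by (intro order_tendstoD(2)) auto
        thus ?thesis by simp
      qed
    qed
    hence "\<forall>\<^sub>F t in at_right 0. z0 + t *\<^sub>R v \<in> T"
      using evV[of v] by eventually_elim (simp add: T_def polydisc_def)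
    then obtain \<delta> where d: "\<delta> > 0" and dT: "\<And>t. 0 < t \<Longrightarrow> t < \<delta> \<Longrightarrow> z0 + t *\<^sub>R v \<in> T"
      unfolding eventually_at_right_field by auto
    have Pd: "((\<lambda>x. w * x) has_field_derivative w) (at (g z0))"
      by (auto intro!: derivative_eq_intros)
    have "Re (w * L v) \<le> - 0"
    proof (rule lemB[OF gd d _ z0S Pd])
      show "z0 + t *\<^sub>R v \<in> S" if "0 < t" "t < \<delta>" for t using dT[OF that] TS by auto
      show "Re (w * g (z0 + t *\<^sub>R v)) \<le> Re (w * g z0) - 0 * t" if "0 < t" "t < \<delta>" for t
      proof -
        have "Re (w * g (z0 + t *\<^sub>R v)) \<le> cmod (w * g (z0 + t *\<^sub>R v))" by (rule complex_Re_le_cmod)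
        also have "\<dots> < 1" using fT[OF dT[OF that]] by (simp add: norm_mult w_def eta1)
        also have "1 = Re (w * g z0)" using gz0 w\<eta> by simp
        finally show ?thesis by simp
      qed
    qed
    thus ?thesis by simp
  qed
  have nonstrict: "Re (w * L v) \<le> 0" if vs: "\<And>k. cmod (z0$k) = 1 \<Longrightarrow> Re (cnj (z0$k) * v$k) \<le> 0" for v
  proof -
    define d where "d = (\<chi> k. if cmod (z0$k) = 1 then - z0$k else 0)"
    have ev: "\<forall>\<^sub>F e in at_right (0::real). Re (w * L v) + e * Re (w * L d) \<le> 0"
      using eventually_at_right_less[of 0]
    proof eventually_elim
      case (elim e)
      have "Re (w * L (v + e *\<^sub>R d)) \<le> 0"
      proof (rule strict)
        fix k assume k: "cmod (z0$k) = 1"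
        have "(v + e *\<^sub>R d)$k = v$k - of_real e * z0$k"
        proof -
          have "(v + e *\<^sub>R d)$k = v$k + e *\<^sub>R (- z0$k)" using k by (simp add: d_def)
          thus ?thesis by (simp add: scaleR_conv_of_real)
        qed
        hence "cnj (z0$k) * (v + e *\<^sub>R d)$k = cnj (z0$k) * v$k - of_real e * (cnj (z0$k) * z0$k)"
          by (simp add: right_diff_distrib mult.left_commute)
        also have "\<dots> = cnj (z0$k) * v$k - of_real e" using cnj_unit[OF k] by simp
        finally show "Re (cnj (z0$k) * (v + e *\<^sub>R d)$k) < 0" using vs[OF k] elim by simp
      qed
      moreover have "w * L (v + e *\<^sub>R d) = w * L v + e *\<^sub>R (w * L d)"
        using Llin by (simp add: linear_add linear_scale distrib_left)
      ultimately show ?case by simp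
    qed
    have lim: "((\<lambda>e. Re (w * L v) + e * Re (w * L d)) \<longlongrightarrow> Re (w * L v) + 0 * Re (w * L d)) (at_right 0)"
      by (intro tendsto_intros)
    have "Re (w * L v) + 0 * Re (w * L d) \<le> 0" by (rule tendsto_upperbound[OF lim ev]) simp
    thus ?thesis by simp
  qed
  have wnz: "w \<noteq> 0" using w\<eta> by auto
  have cint: "c j = 0" if j: "cmod (z0$j) < 1" for j
  proof -
    have "Re (w * L (axis j (cnj (w * c j)))) \<le> 0"
    proof (rule nonstrict)
      fix k assume k: "cmod (z0$k) = 1"
      hence "k \<noteq> j" using j by auto
      thus "Re (cnj (z0$k) * axis j (cnj (w * c j)) $ k) \<le> 0" by (simp add: axis_def)
    qed
    hence "Re ((w * c j) * cnj (w * c j)) \<le> 0" by (simp add: Lax mult.assoc)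
    moreover have "Re ((w * c j) * cnj (w * c j)) = (cmod (w * c j))\<^sup>2"
      by (subst complex_norm_square[symmetric]) simp
    ultimately have "(cmod (w * c j))\<^sup>2 \<le> 0" by linarith
    hence "cmod (w * c j) = 0" by (simp only: power2_less_eq_zero_iff norm_eq_zero)
    thus ?thesis using wnz by simp
  qed
  have cbd: "Im (w * c j * z0$j) = 0 \<and> 0 \<le> Re (w * c j * z0$j)" if j: "cmod (z0$j) = 1" for j
  proof -
    have key: "Re (w * c j * z0$j * u) \<le> 0" if u: "Re u \<le> 0" for u
    proof -
      have "Re (w * L (axis j (z0$j * u))) \<le> 0"
      proof (rule nonstrict)
        fix k assume k: "cmod (z0$k) = 1"
        show "Re (cnj (z0$k) * axis j (z0$j * u) $ k) \<le> 0"
        proof (cases "k = j")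
          case True
          hence "cnj (z0$k) * axis j (z0$j * u) $ k = (cnj (z0$j) * z0$j) * u" by (simp add: axis_def mult.assoc)
          thus ?thesis using cnj_unit[OF j] u by simp
        next
          case False thus ?thesis by (simp add: axis_def)
        qed
      qed
      thus ?thesis by (simp add: Lax mult.assoc)
    qed
    have "Re (w * c j * z0$j * (-1)) \<le> 0" by (rule key) simp
    moreover have "Re (w * c j * z0$j * \<i>) \<le> 0" by (rule key) simp
    moreover have "Re (w * c j * z0$j * (-\<i>)) \<le> 0" by (rule key) simp
    ultimately show ?thesis by simp
  qed
  define \<beta> where "\<beta> j = Re (w * c j * z0$j)" for j
  have wcz: "w * c j * z0$j = of_real (\<beta> j)" for j
  proof (cases "cmod (z0$j) = 1")
    case True thus ?thesis using cbd[OF True] by (simp add: \<beta>_def complex_eq_iff)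
  next
    case False hence "cmod (z0$j) < 1" using bdry(1) by (simp add: order_less_le)
    thus ?thesis using cint by (simp add: \<beta>_def)
  qed
  have \<beta>0: "0 \<le> \<beta> j" for j
  proof (cases "cmod (z0$j) = 1")
    case True thus ?thesis using cbd[OF True] by (simp add: \<beta>_def)
  next
    case False hence "cmod (z0$j) < 1" using bdry(1) by (simp add: order_less_le)
    thus ?thesis using cint by (simp add: \<beta>_def)
  qed
  have \<beta>int: "\<beta> j = 0" if "cmod (z0$j) < 1" for j using cint[OF that] by (simp add: \<beta>_def)
  define a where "a = f 0"
  have zero_pd: "(0::complex^'n) \<in> polydisc" by (simp add: polydisc_def)
  have a1: "cmod a < 1" using maps zero_pd by (simp add: a_def)
  define \<phi> where "\<phi> x = (x - a) / (1 - cnj a * x)" for x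
  define F1 where "F1 = \<phi> \<eta>"
  have F1n: "cmod F1 = 1" unfolding F1_def \<phi>_def by (rule moeb_eq[OF a1 eta1])
  define D where "D = 1 - cnj a * \<eta>"
  have Dnz: "D \<noteq> 0"
  proof
    assume "D = 0" hence "cnj a * \<eta> = 1" by (simp add: D_def)
    hence "cmod (cnj a * \<eta>) = 1" by simp
    thus False using a1 eta1 by (simp add: norm_mult)
  qed
  define P' where "P' = cnj F1 * ((1 - cnj a * a) / D^2)"
  have \<phi>dg: "(\<phi> has_field_derivative ((1 - cnj a * a) / (1 - cnj a * x)^2)) (at x)"
    if "1 - cnj a * x \<noteq> 0" for x
    unfolding \<phi>_def using that
    by (auto intro!: derivative_eq_intros simp: field_simps power2_eq_square)
  have \<phi>d: "(\<phi> has_field_derivative ((1 - cnj a * a) / D^2)) (at \<eta>)"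
    unfolding D_def by (rule \<phi>dg) (use Dnz in \<open>simp add: D_def\<close>)
  have Pd: "((\<lambda>x. cnj F1 * \<phi> x) has_field_derivative P') (at (g z0))"
    unfolding P'_def gz0 by (rule DERIV_cmult[OF \<phi>d])
  define m where "m \<zeta> = (\<chi> k. \<zeta> * z0$k)" for \<zeta> :: complex
  have mpd: "m \<zeta> \<in> polydisc" if "cmod \<zeta> < 1" for \<zeta>
  proof -
    have "cmod (\<zeta> * z0$k) < 1" for k
    proof -
      have "cmod (\<zeta> * z0$k) = cmod \<zeta> * cmod (z0$k)" by (simp add: norm_mult)
      also have "\<dots> \<le> cmod \<zeta>" using bdry(1)[rule_format, of k] by (simp add: mult_left_le)
      finally show ?thesis using that by simp
    qed
    thus ?thesis by (simp add: m_def polydisc_def)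
  qed
  have mlin: "linear m"
  proof (rule linearI)
    show "m (b1 + b2) = m b1 + m b2" for b1 b2 by (simp add: m_def vec_eq_iff distrib_right)
    show "m (r *\<^sub>R b) = r *\<^sub>R m b" for r b by (simp add: m_def vec_eq_iff)
  qed
  have mder: "(m has_derivative m) (at \<zeta>)" for \<zeta>
    by (rule bounded_linear_imp_has_derivative[OF linear_conv_bounded_linear[THEN iffD1, OF mlin]])
  define Fs where "Fs \<zeta> = \<phi> (f (m \<zeta>))" for \<zeta>
  have \<phi>lt: "cmod (\<phi> x) < 1" if "cmod x < 1" for x unfolding \<phi>_def by (rule moeb_lt[OF a1 that])
  have Fshol: "Fs holomorphic_on ball 0 1"
    unfolding holomorphic_on_def
  proof
    fix \<zeta> :: complex assume "\<zeta> \<in> ball 0 1"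
    hence z1: "cmod \<zeta> < 1" by simp
    from holo mpd[OF z1] obtain c' :: "complex^'n" where fd: "(f has_derivative (\<lambda>h. \<Sum>j\<in>UNIV. c' $ j * h $ j)) (at (m \<zeta>))"
      by (auto simp: holo_on_def)
    have "((f \<circ> m) has_derivative ((\<lambda>h. \<Sum>j\<in>UNIV. c' $ j * h $ j) \<circ> m)) (at \<zeta>)"
      by (rule diff_chain_at[OF mder fd])
    moreover have "((\<lambda>h. \<Sum>j\<in>UNIV. c' $ j * h $ j) \<circ> m) = (*) (\<Sum>j\<in>UNIV. c' $ j * z0 $ j)"
      by (rule ext) (simp add: m_def sum_distrib_left mult.left_commute mult.commute)
    ultimately have "((f \<circ> m) has_field_derivative (\<Sum>j\<in>UNIV. c' $ j * z0 $ j)) (at \<zeta>)"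
      by (simp add: has_field_derivative_def)
    hence d1: "(f \<circ> m) field_differentiable at \<zeta>" by (auto simp: field_differentiable_def)
    have fl: "cmod (f (m \<zeta>)) < 1" using maps mpd[OF z1] by auto
    have den2: "1 - cnj a * f (m \<zeta>) \<noteq> 0"
    proof
      assume "1 - cnj a * f (m \<zeta>) = 0" hence "cmod (cnj a * f (m \<zeta>)) = 1" by simp
      thus False using a1 fl by (simp add: norm_mult) (metis mult_strict_mono' norm_ge_zero mult_1 order_less_irrefl)
    qed
    have d2: "\<phi> field_differentiable at ((f \<circ> m) \<zeta>)"
      unfolding field_differentiable_def using \<phi>dg[OF den2] by auto
    have "(\<phi> \<circ> (f \<circ> m)) field_differentiable at \<zeta>" by (rule field_differentiable_compose[OF d1 d2])
    moreover have "\<phi> \<circ> (f \<circ> m) = Fs" by (rule ext) (simp add: Fs_def)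
    ultimately show "Fs field_differentiable at \<zeta> within ball 0 1"
      using field_differentiable_at_within by metis
  qed
  have Fs0: "Fs 0 = 0"
  proof -
    have "m 0 = 0" by (simp add: m_def vec_eq_iff)
    thus ?thesis by (simp add: Fs_def a_def \<phi>_def)
  qed
  have Fslt: "cmod (Fs \<zeta>) < 1" if "cmod \<zeta> < 1" for \<zeta>
    unfolding Fs_def using \<phi>lt maps mpd[OF that] by auto
  have schw: "cmod (Fs \<xi>) \<le> cmod \<xi>" if "cmod \<xi> < 1" for \<xi>
    by (rule Schwarz_Lemma(1)[OF Fshol Fs0 Fslt that])
  have ev3: "\<forall>\<^sub>F t in at_right 0. z0 - t *\<^sub>R z0 \<in> T \<and> t < 1"
  proof -
    have "\<forall>\<^sub>F t in at_right (0::real). t \<in> {0<..<1}" by (rule eventually_at_right_real) simp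
    with radT show ?thesis by eventually_elim auto
  qed
  then obtain \<delta> where d: "\<delta> > 0" and dT: "\<And>t. 0 < t \<Longrightarrow> t < \<delta> \<Longrightarrow> z0 - t *\<^sub>R z0 \<in> T \<and> t < 1"
    unfolding eventually_at_right_field by auto
  have "Re (P' * L (- z0)) \<le> - 1"
  proof (rule lemB[OF gd d _ z0S Pd])
    show "z0 + t *\<^sub>R (- z0) \<in> S" if "0 < t" "t < \<delta>" for t using dT[OF that] TS by auto
    show "Re (cnj F1 * \<phi> (g (z0 + t *\<^sub>R (- z0)))) \<le> Re (cnj F1 * \<phi> (g z0)) - 1 * t"
      if t: "0 < t" "t < \<delta>" for t
    proof -
      have tT: "z0 - t *\<^sub>R z0 \<in> T" and t1: "t < 1" using dT[OF t] by auto
      have em: "z0 + t *\<^sub>R (- z0) = m (of_real (1 - t))"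
        by (subst vec_eq_iff, rule allI) (simp add: m_def scaleR_conv_of_real[where 'a=complex] algebra_simps)
      have nr: "cmod (of_real (1 - t) :: complex) = 1 - t" using t1 by (simp only: norm_of_real)
      have n1: "cmod (of_real (1 - t) :: complex) < 1" using t nr by simp
      have "g (z0 + t *\<^sub>R (- z0)) = f (m (of_real (1 - t)))" using gf tT em by (simp add: T_def)
      hence "Re (cnj F1 * \<phi> (g (z0 + t *\<^sub>R (- z0)))) = Re (cnj F1 * Fs (of_real (1 - t)))" by (simp add: Fs_def)
      also have "\<dots> \<le> cmod (cnj F1 * Fs (of_real (1 - t)))" by (rule complex_Re_le_cmod)
      also have "\<dots> = cmod (Fs (of_real (1 - t)))" using F1n by (simp add: norm_mult)
      also have "\<dots> \<le> cmod (of_real (1 - t) :: complex)" by (rule schw[OF n1])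
      also have "\<dots> = 1 - t" by (rule nr)
      also have "1 = Re (cnj F1 * \<phi> (g z0))"
        using complex_norm_square[of F1] F1n by (simp add: gz0 F1_def[symmetric] mult.commute)
      finally show ?thesis by simp
    qed
  qed
  hence J: "1 \<le> Re (P' * L z0)" using Llin by (simp add: linear_neg)
  define lam where "lam = (cmod D)\<^sup>2 / (1 - (cmod a)\<^sup>2)"
  have a2: "0 < 1 - (cmod a)\<^sup>2" using a1 by (simp add: power_less_one_iff abs_less_iff)
  have lampos: "0 < lam" unfolding lam_def using Dnz a2 by simp
  have cF: "cnj F1 = w * D / cnj D"
  proof -
    have "cnj F1 = (w - cnj a) / cnj D" by (simp add: F1_def \<phi>_def D_def w_def)
    also have "w - cnj a = w * D" using w\<eta> by (simp add: D_def right_diff_distrib mult.left_commute)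
    finally show ?thesis .
  qed
  have DD: "cnj D * D = of_real ((cmod D)\<^sup>2)" using complex_norm_square[of D] by (simp add: mult.commute)
  have aa: "cnj a * a = of_real ((cmod a)\<^sup>2)" using complex_norm_square[of a] by (simp add: mult.commute)
  have cDnz: "cnj D \<noteq> 0" using Dnz by simp
  have P'eq: "P' = w * of_real (1 / lam)"
  proof -
    have "P' = w * (1 - cnj a * a) / (cnj D * D)"
      unfolding P'_def cF using Dnz cDnz by (simp add: field_simps power2_eq_square)
    also have "\<dots> = w * of_real ((1 - (cmod a)\<^sup>2) / (cmod D)\<^sup>2)" unfolding DD aa by simp
    finally show ?thesis by (simp add: lam_def)
  qed
  have wL: "w * L z0 = of_real (\<Sum>j\<in>UNIV. \<beta> j)"
    unfolding Lexp by (simp add: sum_distrib_left mult.assoc[symmetric] wcz)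
  have "Re (P' * L z0) = (\<Sum>j\<in>UNIV. \<beta> j) / lam"
    unfolding P'eq using wL by (simp add: mult.assoc mult.left_commute[of "of_real (1/lam)"])
  hence sb: "lam \<le> (\<Sum>j\<in>UNIV. \<beta> j)" using J lampos by (simp add: le_divide_eq)
  have sumB: "(\<Sum>j\<in>UNIV. \<beta> j) = (\<Sum>j\<in>{j. cmod (z0$j) = 1}. \<beta> j)"
  proof (rule sum.mono_neutral_right)
    show "\<forall>i\<in>UNIV - {j. cmod (z0 $ j) = 1}. \<beta> i = 0"
      using \<beta>int bdry(1) by (auto simp: order_less_le)
  qed auto
  define \<gamma> where "\<gamma> j = \<beta> j / lam" for j
  have cp: "cpartial (Dg z0) j = c j" for j
    unfolding cpartial_def L_def[symmetric] using cl[of j] by (simp add: c_def)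
  show ?thesis
  proof (intro exI[of _ \<gamma>] conjI allI impI)
    show "0 \<le> \<gamma> j" for j using \<beta>0 lampos by (simp add: \<gamma>_def)
    show "\<gamma> j = 0" if "cmod (z0$j) < 1" for j using \<beta>int[OF that] by (simp add: \<gamma>_def)
    have "(\<Sum>j\<in>{j. cmod (z0 $ j) = 1}. \<gamma> j) = (\<Sum>j\<in>UNIV. \<beta> j) / lam"
      unfolding \<gamma>_def sumB by (simp add: sum_divide_distrib)
    thus "1 \<le> (\<Sum>j\<in>{j. cmod (z0 $ j) = 1}. \<gamma> j)" using sb lampos by (simp add: le_divide_eq)
    fix j
    have lg0: "lam * \<gamma> j = \<beta> j" using lampos by (simp add: \<gamma>_def)
    have lg: "of_real lam * of_real (\<gamma> j) = (of_real (\<beta> j) :: complex)"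
      by (metis lg0 of_real_mult)
    have "cnj (c j) * \<eta> = of_real (\<beta> j) * z0$j"
    proof (cases "cmod (z0$j) = 1")
      case True
      have "cnj (w * c j * z0$j) = of_real (\<beta> j)" by (simp add: wcz)
      hence "\<eta> * cnj (c j) * cnj (z0$j) = of_real (\<beta> j)" by (simp add: w_def)
      hence e2: "(\<eta> * cnj (c j) * cnj (z0$j)) * z0$j = of_real (\<beta> j) * z0$j"
        by (rule arg_cong[where f="\<lambda>x. x * z0$j"])
      have "\<eta> * cnj (c j) = (\<eta> * cnj (c j) * cnj (z0$j)) * z0$j" using cnj_unit[OF True] by (simp add: mult.assoc)
      with e2 show ?thesis by (metis mult.commute)
    next
      case False hence "cmod (z0$j) < 1" using bdry(1) by (simp add: order_less_le)
      thus ?thesis using cint \<beta>int by simp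
    qed
    thus "cnj (cpartial (Dg z0) j) * exp (\<i> * of_real \<theta>) =
      of_real ((cmod (1 - cnj (f 0) * exp (\<i> * of_real \<theta>)))\<^sup>2 / (1 - (cmod (f 0))\<^sup>2)) * of_real (\<gamma> j) * z0 $ j"
      using lg by (simp add: cp \<eta>_def[symmetric] a_def[symmetric] D_def[symmetric] lam_def[symmetric])
  qed
qed

end
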